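(* Let $a,b,c>0$. Let $B(a,b,c)$ be the semi-infinite matrix indexed by $j,k\in\mathbb{Z}_{+}$ with entries \[ B(a,b,c)_{j,k}=\frac{\Gamma(j+k+a)}{\Gamma(j+k+b+c)}\sqrt{\frac{\Gamma(j+b)\Gamma(j+c)\Gamma(k+b)\Gamma(k+c)}{\Gamma(j+a)\,j!\,\Gamma(k+a)\,k!}}, \] and let $T(a,b,c)$ be the symmetric Jacobi matrix indexed by $\mathbb{Z}_{+}$ with entries \[ T_{j,j}=j\,(j+c-1)+(j+a)(j+b),\qquad T_{j,j+1}=T_{j+1,j}=-\sqrt{(j+1)(j+a)(j+b)(j+c)}, \] and $T_{j,k}=0$ if $|j-k|\ge 2$. Then $B(a,b,c)$ and $T(a,b,c)$ commute (as matrices, the products being well defined entrywise since $T$ is tridiagonal).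
   Context: $\mathbb{Z}_{+}=\{0,1,2,\ldots\}$ and $\Gamma$ is Euler's Gamma function. *)

theory Defs
  imports "HOL-Analysis.Analysis"
begin

definition Bmat :: "real \<Rightarrow> real \<Rightarrow> real \<Rightarrow> nat \<Rightarrow> nat \<Rightarrow> real" where
  "Bmat a b c j k =
     Gamma (real (j + k) + a) / Gamma (real (j + k) + b + c) *
     sqrt ((Gamma (real j + b) * Gamma (real j + c) * Gamma (real k + b) * Gamma (real k + c)) /
           (Gamma (real j + a) * fact j * Gamma (real k + a) * fact k))"

definition Tmat :: "real \<Rightarrow> real \<Rightarrow> real \<Rightarrow> nat \<Rightarrow> nat \<Rightarrow> real" where
  "Tmat a b c j k =
     (if j = k then real j * (real j + c - 1) + (real j + a) * (real j + b)
      else if k = j + 1 then - sqrt (real (j + 1) * (real j + a) * (real j + b) * (real j + c))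
      else if j = k + 1 then - sqrt (real (k + 1) * (real k + a) * (real k + b) * (real k + c))
      else 0)"

text \<open>Products with the tridiagonal T are finite sums: (B T)_{jk} only involves l <= k+1,
  and (T B)_{jk} only involves l <= j+1 (all other entries of T vanish).\<close>

definition mult_right_tridiag :: "(nat \<Rightarrow> nat \<Rightarrow> real) \<Rightarrow> (nat \<Rightarrow> nat \<Rightarrow> real) \<Rightarrow> nat \<Rightarrow> nat \<Rightarrow> real" where
  "mult_right_tridiag M T j k = (\<Sum>l\<le>k+1. M j l * T l k)"

definition mult_left_tridiag :: "(nat \<Rightarrow> nat \<Rightarrow> real) \<Rightarrow> (nat \<Rightarrow> nat \<Rightarrow> real) \<Rightarrow> nat \<Rightarrow> nat \<Rightarrow> real" where
  "mult_left_tridiag T M j k = (\<Sum>l\<le>j+1. T j l * M l k)"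

end

theory Submission
  imports Defs
begin

lemma Gp: "x > 0 \<Longrightarrow> Gamma (x + 1) = x * Gamma (x::real)"
  by (rule Gamma_plus1) (auto simp: nonpos_Ints_def)

definition gg :: "real \<Rightarrow> real \<Rightarrow> real \<Rightarrow> real \<Rightarrow> real" where
  "gg a b c x = Gamma (x + a) / Gamma (x + b + c)"

definition ww :: "real \<Rightarrow> real \<Rightarrow> real \<Rightarrow> nat \<Rightarrow> real" where
  "ww a b c j = sqrt (Gamma (real j + b) * Gamma (real j + c) / (Gamma (real j + a) * fact j))"

definition FF :: "real \<Rightarrow> real \<Rightarrow> real \<Rightarrow> real \<Rightarrow> real \<Rightarrow> real" where
  "FF a b c y n = - gg a b c (n - 1) * y * (y - 1 + a)
     + gg a b c n * (y * (y + c - 1) + (y + a) * (y + b))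
     - gg a b c (n + 1) * ((y + b) * (y + c))"

lemma B_eq: "Bmat a b c j k = gg a b c (real (j+k)) * ww a b c j * ww a b c k"
proof -
  have "(Gamma (real j + b) * Gamma (real j + c) * Gamma (real k + b) * Gamma (real k + c)) /
           (Gamma (real j + a) * fact j * Gamma (real k + a) * fact k)
    = (Gamma (real j + b) * Gamma (real j + c) / (Gamma (real j + a) * fact j)) *
      (Gamma (real k + b) * Gamma (real k + c) / (Gamma (real k + a) * fact k))"
    by (simp add: times_divide_times_eq mult.assoc mult.left_commute)
  then show ?thesis unfolding Bmat_def gg_def ww_def
    by (simp only: real_sqrt_mult mult.assoc)
qed

lemma B_sym: "Bmat a b c j k = Bmat a b c k j"
  by (simp add: B_eq add.commute mult.commute mult.left_commute)

lemma T_sym: "Tmat a b c j k = Tmat a b c k j"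
  unfolding Tmat_def by auto

lemma aux_div: "s \<noteq> (0::real) \<Longrightarrow> (t * p / (s * q)) * s = p / q * t"
  by (simp add: field_simps)

lemma gg_succ:
  assumes "a > 0" "b > 0" "c > 0" "x \<ge> 0"
  shows "gg a b c (x + 1) * (x + b + c) = gg a b c x * (x + a)"
proof -
  have "Gamma (x + 1 + a) = (x + a) * Gamma (x + a)"
    using Gp[of "x + a"] assms by (simp add: add_ac)
  moreover have "Gamma (x + 1 + b + c) = (x + b + c) * Gamma (x + b + c)"
    using Gp[of "x + b + c"] assms by (simp add: add_ac)
  moreover have "Gamma (x + b + c) > 0" using assms by simp
  ultimately have h: "gg a b c (x + 1) = (x + a) * Gamma (x + a) / ((x + b + c) * Gamma (x + b + c))"
    by (simp only: gg_def)
  have "x + b + c > 0" "Gamma (x + b + c) > 0" using assms by simp_all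
  have "gg a b c (x + 1) * (x + b + c) = ((x + a) * Gamma (x + a) / ((x + b + c) * Gamma (x + b + c))) * (x + b + c)"
    by (simp only: h)
  also have "\<dots> = gg a b c x * (x + a)" unfolding gg_def
    by (rule aux_div) (use \<open>x+b+c > 0\<close> in linarith)
  finally show ?thesis .
qed

lemma w_succ:
  assumes "a > 0" "b > 0" "c > 0"
  shows "ww a b c (Suc k) * sqrt (real (k+1) * (real k + a) * (real k + b) * (real k + c))
       = ww a b c k * ((real k + b) * (real k + c))"
proof -
  define P where "P = Gamma (real k + b)"
  define Q where "Q = Gamma (real k + c)"
  define R where "R = Gamma (real k + a)"
  define f where "f = (fact k :: real)"
  have pos: "P > 0" "Q > 0" "R > 0" "f > 0" using assms unfolding P_def Q_def R_def f_def by auto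
  have e1: "Gamma (real (Suc k) + b) = (real k + b) * P"
    using Gp[of "real k + b"] assms unfolding P_def by (simp add: add_ac)
  have e2: "Gamma (real (Suc k) + c) = (real k + c) * Q"
    using Gp[of "real k + c"] assms unfolding Q_def by (simp add: add_ac)
  have e3: "Gamma (real (Suc k) + a) = (real k + a) * R"
    using Gp[of "real k + a"] assms unfolding R_def by (simp add: add_ac)
  have e4: "(fact (Suc k) :: real) = real (k+1) * f" unfolding f_def by simp
  have "ww a b c (Suc k) * sqrt (real (k+1) * (real k + a) * (real k + b) * (real k + c))
      = sqrt ((real k + b) * P * ((real k + c) * Q) / ((real k + a) * R * (real (k+1) * f))
           * (real (k+1) * (real k + a) * (real k + b) * (real k + c)))"
    unfolding ww_def e1 e2 e3 e4 real_sqrt_mult[symmetric] by (rule refl)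
  also have "(real k + b) * P * ((real k + c) * Q) / ((real k + a) * R * (real (k+1) * f))
           * (real (k+1) * (real k + a) * (real k + b) * (real k + c))
       = P * Q / (R * f) * ((real k + b) * (real k + c))^2"
  proof -
    have "real k + a \<noteq> 0" "real (k+1) \<noteq> 0" using assms by linarith+
    moreover have "\<And>A K B C P Q R f::real. A \<noteq> 0 \<Longrightarrow> K \<noteq> 0 \<Longrightarrow>
       B * P * (C * Q) / (A * R * (K * f)) * (K * A * B * C) = P * Q / (R * f) * (B * C)^2"
      by (simp add: field_simps power2_eq_square)
    ultimately show ?thesis by blast
  qed
  also have "sqrt (P * Q / (R * f) * ((real k + b) * (real k + c))^2)
       = sqrt (P * Q / (R * f)) * ((real k + b) * (real k + c))"
    unfolding real_sqrt_mult real_sqrt_abs using assms by simp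
  also have "\<dots> = ww a b c k * ((real k + b) * (real k + c))"
    unfolding ww_def P_def Q_def R_def f_def by (rule refl)
  finally show ?thesis .
qed

lemma w_pred:
  assumes "a > 0" "b > 0" "c > 0"
  shows "ww a b c m * sqrt (real (m+1) * (real m + a) * (real m + b) * (real m + c))
       = ww a b c (Suc m) * (real (m+1) * (real m + a))"
proof -
  define S where "S = sqrt (real (m+1) * (real m + a) * (real m + b) * (real m + c))"
  have S2: "S * S = real (m+1) * (real m + a) * (real m + b) * (real m + c)"
    unfolding S_def using assms by (simp add: zero_le_mult_iff)
  have bc: "(real m + b) * (real m + c) > 0" using assms by simp
  have h: "ww a b c (Suc m) * S = ww a b c m * ((real m + b) * (real m + c))"
    using w_succ[OF assms, of m] unfolding S_def .
  have eq: "ww a b c m * S * ((real m + b) * (real m + c))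
      = ww a b c (Suc m) * (real (m+1) * (real m + a)) * ((real m + b) * (real m + c))"
    using h S2 by (smt (verit) mult.assoc mult.commute mult.left_commute)
  have ne: "(real m + b) * (real m + c) \<noteq> 0" using bc by linarith
  show ?thesis unfolding S_def[symmetric]
    by (rule mult_right_cancel[OF ne, THEN iffD1]) (fact eq)
qed

lemma FF_sym:
  assumes "a > 0" "b > 0" "c > 0"
  shows "FF a b c (real k) (real j + real k) = FF a b c (real j) (real j + real k)"
proof (cases "j + k = 0")
  case True
  then show ?thesis by simp
next
  case False
  define x where "x = real j"
  define y where "y = real k"
  have False: "\<not> x + y < 1" using False unfolding x_def y_def by linarith
  define n where "n = x + y"
  define G where "G = gg a b c n"
  have n1: "n - 1 \<ge> 0" using False n_def by simp
  have h1: "G * (n - 1 + b + c) = gg a b c (n - 1) * (n - 1 + a)"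
    using gg_succ[OF assms(1-3) n1] unfolding G_def by simp
  have h2: "gg a b c (n + 1) * (n + b + c) = G * (n + a)"
    using gg_succ[OF assms(1-3), of n] n1 unfolding G_def by simp
  have p1: "n - 1 + a > 0" "n - 1 + b + c > 0" "n + a > 0" "n + b + c > 0" using n1 assms by auto
  have e1: "gg a b c (n - 1) = G * (n - 1 + b + c) / (n - 1 + a)"
    using h1 p1 by (simp add: field_simps)
  have e2: "gg a b c (n + 1) = G * (n + a) / (n + b + c)"
    using h2 p1 by (simp add: field_simps)
  show ?thesis unfolding x_def[symmetric] y_def[symmetric] n_def[symmetric] FF_def e1 e2 G_def[symmetric]
    using p1 unfolding n_def by (simp add: field_simps)
qed


definition SS :: "real \<Rightarrow> real \<Rightarrow> real \<Rightarrow> nat \<Rightarrow> real" where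
  "SS a b c m = sqrt (real (m+1) * (real m + a) * (real m + b) * (real m + c))"

lemma T_diag: "Tmat a b c k k = real k * (real k + c - 1) + (real k + a) * (real k + b)"
  unfolding Tmat_def by simp
lemma T_up: "Tmat a b c m (Suc m) = - SS a b c m"
  unfolding Tmat_def SS_def by simp
lemma T_down: "Tmat a b c (Suc m) m = - SS a b c m"
  unfolding Tmat_def SS_def by simp
lemma T_far: "l < m \<Longrightarrow> Tmat a b c l (Suc m) = 0"
  unfolding Tmat_def by simp

lemma right_form:
  assumes "a > 0" "b > 0" "c > 0"
  shows "mult_right_tridiag (Bmat a b c) (Tmat a b c) j k
       = ww a b c j * ww a b c k * FF a b c (real k) (real j + real k)"
proof (cases k)
  case 0
  have s: "mult_right_tridiag (Bmat a b c) (Tmat a b c) j 0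
      = Bmat a b c j 0 * Tmat a b c 0 0 + Bmat a b c j 1 * Tmat a b c 1 0"
    unfolding mult_right_tridiag_def by simp
  have w: "ww a b c 1 * SS a b c 0 = ww a b c 0 * (b * c)"
    using w_succ[OF assms, of 0] unfolding SS_def by simp
  have "Bmat a b c j 1 * Tmat a b c 1 0 = - gg a b c (real j + 1) * ww a b c j * (ww a b c 1 * SS a b c 0)"
    using T_down[of a b c 0] unfolding B_eq by (simp add: add.commute)
  also have "\<dots> = - gg a b c (real j + 1) * ww a b c j * ww a b c 0 * (b * c)"
    unfolding w by simp
  finally have "mult_right_tridiag (Bmat a b c) (Tmat a b c) j 0
     = gg a b c (real j) * ww a b c j * ww a b c 0 * (a * b) - gg a b c (real j + 1) * ww a b c j * ww a b c 0 * (b * c)"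
    unfolding s B_eq T_diag by simp
  then show ?thesis using 0 unfolding FF_def by (simp add: algebra_simps)
next
  case (Suc m)
  have s: "mult_right_tridiag (Bmat a b c) (Tmat a b c) j (Suc m)
      = Bmat a b c j m * Tmat a b c m (Suc m) + Bmat a b c j (Suc m) * Tmat a b c (Suc m) (Suc m)
        + Bmat a b c j (Suc (Suc m)) * Tmat a b c (Suc (Suc m)) (Suc m)"
  proof -
    have "(\<Sum>l<m. Bmat a b c j l * Tmat a b c l (Suc m)) = 0"
      by (rule sum.neutral) (simp add: T_far)
    then show ?thesis unfolding mult_right_tridiag_def
      by (simp add: lessThan_Suc_atMost[symmetric])
  qed
  have w1: "ww a b c m * SS a b c m = ww a b c (Suc m) * (real (m+1) * (real m + a))"
    using w_pred[OF assms, of m] unfolding SS_def .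
  have w2: "ww a b c (Suc (Suc m)) * SS a b c (Suc m) = ww a b c (Suc m) * ((real (Suc m) + b) * (real (Suc m) + c))"
    using w_succ[OF assms, of "Suc m"] unfolding SS_def .
  have "mult_right_tridiag (Bmat a b c) (Tmat a b c) j (Suc m)
     = - gg a b c (real (j + m)) * ww a b c j * (ww a b c m * SS a b c m)
       + gg a b c (real (j + Suc m)) * ww a b c j * ww a b c (Suc m) * (real (Suc m) * (real (Suc m) + c - 1) + (real (Suc m) + a) * (real (Suc m) + b))
       - gg a b c (real (j + Suc (Suc m))) * ww a b c j * (ww a b c (Suc (Suc m)) * SS a b c (Suc m))"
    unfolding s B_eq T_diag T_up T_down by (simp add: algebra_simps)
  also have "\<dots> = ww a b c j * ww a b c (Suc m) * FF a b c (real (Suc m)) (real j + real (Suc m))"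
    unfolding w1 w2 FF_def by (simp add: algebra_simps)
  finally show ?thesis using Suc by simp
qed


theorem mainTheorem2:
  fixes a b c :: real
  assumes "a > 0" and "b > 0" and "c > 0"
  shows "\<forall>j k. mult_right_tridiag (Bmat a b c) (Tmat a b c) j k
              = mult_left_tridiag (Tmat a b c) (Bmat a b c) j k"
proof (intro allI)
  fix j k
  have "mult_left_tridiag (Tmat a b c) (Bmat a b c) j k = mult_right_tridiag (Bmat a b c) (Tmat a b c) k j"
    unfolding mult_left_tridiag_def mult_right_tridiag_def
    by (rule sum.cong) (simp_all add: B_sym[of a b c _ k] T_sym[of a b c j] mult.commute)
  also have "\<dots> = ww a b c k * ww a b c j * FF a b c (real j) (real k + real j)"
    by (rule right_form[OF assms])
  also have "\<dots> = ww a b c j * ww a b c k * FF a b c (real k) (real j + real k)"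
    using FF_sym[OF assms, of j k] by (simp add: add.commute mult.commute)
  also have "\<dots> = mult_right_tridiag (Bmat a b c) (Tmat a b c) j k"
    by (rule right_form[OF assms, symmetric])
  finally show "mult_right_tridiag (Bmat a b c) (Tmat a b c) j k
              = mult_left_tridiag (Tmat a b c) (Bmat a b c) j k" by simp
qed

end
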